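(* Let $\mathcal{P}\subset K[x_1,\ldots,x_n]$ be a chordal polynomial set with $x_1<\cdots<x_n$ as a perfect elimination ordering. Consider a successive reduction $\overline{\mathrm{red}}_n(\mathcal{P}),\overline{\mathrm{red}}_{n-1}(\mathcal{P}),\ldots,\overline{\mathrm{red}}_1(\mathcal{P})$. Assume that for each $i=n,\ldots,1$ with $\overline{\mathrm{red}}_{i+1}(\mathcal{P})^{(i)}\neq\emptyset$, the reduction data $(T_i,\mathcal{R}_i)$ used at step $i$ satisfies $\mathrm{supp}(T_i)=\mathrm{supp}\big(\overline{\mathrm{red}}_{i+1}(\mathcal{P})^{(i)}\big)$. Then $G(\overline{\mathrm{red}}_1(\mathcal{P}))=G(\mathcal{P})$.
   Context: Let $K$ be a field and $K[x_1,\ldots,x_n]$ the polynomial ring, with the variables ordered $x_1<\cdots<x_n$. For a polynomial $F$, $\mathrm{supp}(F)$ is the set of variables effectively appearing in $F$. For a set of polynomials $\mathcal{P}$, $\mathrm{supp}(\mathcal{P})=\bigcup_{F\in\mathcal{P}}\mathrm{supp}(F)$. For a nonconstant $F$, $\mathrm{lv}(F)$ is the greatest variable in $\mathrm{supp}(F)$. For a polynomial set $\mathcal{P}$ and $1\le i\le n$, $\mathcal{P}^{(i)}=\{P\in\mathcal{P}:\mathrm{lv}(P)=x_i\}$; constants belong to no $\mathcal{P}^{(i)}$. The associated graph $G(\mathcal{P})$ is the undirected graph whose vertex set is $\mathrm{supp}(\mathcal{P})$, with an edge between distinct $x_i,x_j$ iff some $F\in\mathcal{P}$ has $x_i,x_j\in\mathrm{supp}(F)$.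 For graphs, $G\subseteq G'$ means that $G$ is a subgraph of $G'$, i.e. both the vertex set and the edge set are contained. An ordering of the vertices of a graph is a perfect elimination ordering if, for every vertex $v$, the set consisting of $v$ and all neighbours of $v$ smaller than $v$ is a clique. A polynomial set $\mathcal{P}$ is called chordal with $x_1<\cdots<x_n$ as a perfect elimination ordering if the restriction of this ordering to $\mathrm{supp}(\mathcal{P})$ is a perfect elimination ordering of $G(\mathcal{P})$. Reduction step: let $\mathcal{S}$ be a polynomial set and $1\le i\le n$ with $\mathcal{S}^{(i)}\neq\emptyset$. Reduction data for $(\mathcal{S},i)$ is a pair $(T_i,\mathcal{R}_i)$ such that: - $T_i\in K[x_1,\ldots,x_i]\setminus K[x_1,\ldots,x_{i-1}]$ and $\mathcal{R}_i\subset K[x_1,\ldots,x_{i-1}]$, where $K[x_1,\ldots,x_0]=K$; - $\mathrm{supp}(T_i)\subseteq\mathrm{supp}(\mathcal{S}^{(i)})$ and $\mathrm{supp}(\mathcal{R}_i)\subseteq\mathrm{supp}(\mathcal{S}^{(i)})$. Such a pair arises, for example, from $T_i$ and pseudo-remainders. Given such a pair, $$\mathrm{red}_i(\mathcal{S})=\bigcup_{j>i}\mathcal{S}^{(j)}\ \cup\ \{T_i\}\ \cup\ \bigcup_{j<i}\big(\mathcal{S}^{(j)}\cup\mathcal{R}_i^{(j)}\big).$$ If $\mathcal{S}^{(i)}=\emptyset$, set $\mathrm{red}_i(\mathcal{S})=\bigcup_{j}\mathcal{S}^{(j)}$. Successive reduction: $\overline{\mathrm{red}}_{n+1}(\mathcal{P})=\mathcal{P}$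 and $\overline{\mathrm{red}}_i(\mathcal{P})=\mathrm{red}_i(\overline{\mathrm{red}}_{i+1}(\mathcal{P}))$ for $i=n,\ldots,1$. At each step some reduction data for $(\overline{\mathrm{red}}_{i+1}(\mathcal{P}),i)$ is chosen. *)

theory Defs
  imports "HOL-Library.Poly_Mapping"
begin

text \<open>Multivariate polynomials over K in variables x_1, x_2, ... (indexed by nat):
  a polynomial is a finitely supported map from monomials (exponent vectors,
  finitely supported nat => nat) to coefficients.\<close>
type_synonym 'a mpoly = "(nat \<Rightarrow>\<^sub>0 nat) \<Rightarrow>\<^sub>0 'a"

definition supp :: "'a::zero mpoly \<Rightarrow> nat set" where
  "supp F = (\<Union>m\<in>Poly_Mapping.keys F. Poly_Mapping.keys m)"

definition suppS :: "'a::zero mpoly set \<Rightarrow> nat set" where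
  "suppS P = \<Union> (supp ` P)"

definition lv :: "'a::zero mpoly \<Rightarrow> nat" where
  "lv F = Max (supp F)"

definition level :: "'a::zero mpoly set \<Rightarrow> nat \<Rightarrow> 'a mpoly set" where
  "level P i = {F \<in> P. supp F \<noteq> {} \<and> lv F = i}"

text \<open>Associated graph: (vertex set, edge relation) as a set of ordered pairs (symmetric).\<close>
definition assoc_graph :: "'a::zero mpoly set \<Rightarrow> nat set \<times> (nat \<times> nat) set" where
  "assoc_graph P = (suppS P,
     {(a, b). a \<noteq> b \<and> (\<exists>F\<in>P. a \<in> supp F \<and> b \<in> supp F)})"

definition is_peo :: "nat set \<times> (nat \<times> nat) set \<Rightarrow> bool" where
  "is_peo G = (\<forall>v \<in> fst G.
      (\<forall>a \<in> insert v {u \<in> fst G. u < v \<and> (u, v) \<in> snd G}.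
       \<forall>b \<in> insert v {u \<in> fst G. u < v \<and> (u, v) \<in> snd G}.
         a \<noteq> b \<longrightarrow> (a, b) \<in> snd G))"

definition chordal :: "'a::zero mpoly set \<Rightarrow> bool" where
  "chordal P = is_peo (assoc_graph P)"

definition red_data :: "'a::zero mpoly set \<Rightarrow> nat \<Rightarrow> 'a mpoly \<Rightarrow> 'a mpoly set \<Rightarrow> bool" where
  "red_data S i T R =
     (supp T \<subseteq> {1..i} \<and> i \<in> supp T \<and> (\<forall>F\<in>R. supp F \<subseteq> {1..<i}) \<and>
      supp T \<subseteq> suppS (level S i) \<and> suppS R \<subseteq> suppS (level S i))"

definition red :: "nat \<Rightarrow> 'a::zero mpoly set \<Rightarrow> nat \<Rightarrow> 'a mpoly \<Rightarrow> 'a mpoly set \<Rightarrow> 'a mpoly set" where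
  "red n S i T R =
     (if level S i = {} then (\<Union>j\<in>{1..n}. level S j)
      else (\<Union>j\<in>{i<..n}. level S j) \<union> {T} \<union> (\<Union>j\<in>{1..<i}. level S j \<union> level R j))"

end

theory Submission
  imports Defs
begin

lemma finite_supp: "finite (supp F)"
  unfolding supp_def by auto

lemma lv_in: "supp F \<noteq> {} \<Longrightarrow> lv F \<in> supp F"
  unfolding lv_def by (simp add: finite_supp)

lemma le_lv: "a \<in> supp F \<Longrightarrow> a \<le> lv F"
  unfolding lv_def by (simp add: finite_supp)

lemma graph_eq:
  assumes "\<And>a b. (\<exists>F\<in>P. a \<in> supp F \<and> b \<in> supp F) = (\<exists>F\<in>P'. a \<in> supp F \<and> b \<in> supp F)"
  shows "assoc_graph P = assoc_graph P'"
proof -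
  have "suppS P = suppS P'" using assms[of _ _] unfolding suppS_def by blast
  moreover have "{(a, b). a \<noteq> b \<and> (\<exists>F\<in>P. a \<in> supp F \<and> b \<in> supp F)}
     = {(a, b). a \<noteq> b \<and> (\<exists>F\<in>P'. a \<in> supp F \<and> b \<in> supp F)}" using assms by blast
  ultimately show ?thesis unfolding assoc_graph_def by simp
qed

lemma clique:
  assumes ch: "chordal S" and a: "a \<in> suppS (level S i)" and b: "b \<in> suppS (level S i)"
  shows "\<exists>F\<in>S. a \<in> supp F \<and> b \<in> supp F"
proof -
  obtain F1 where F1: "F1 \<in> S" "supp F1 \<noteq> {}" "lv F1 = i" "a \<in> supp F1"
    using a unfolding suppS_def level_def by auto
  obtain F2 where F2: "F2 \<in> S" "supp F2 \<noteq> {}" "lv F2 = i" "b \<in> supp F2"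
    using b unfolding suppS_def level_def by auto
  have i1: "i \<in> supp F1" using lv_in[OF F1(2)] F1(3) by simp
  have i2: "i \<in> supp F2" using lv_in[OF F2(2)] F2(3) by simp
  have al: "a \<le> i" using le_lv[OF F1(4)] F1(3) by simp
  have bl: "b \<le> i" using le_lv[OF F2(4)] F2(3) by simp
  show ?thesis
  proof (cases "a = b \<or> a = i \<or> b = i")
    case True then show ?thesis using F1 F2 i1 i2 by blast
  next
    case False
    let ?V = "suppS S"
    let ?E = "snd (assoc_graph S)"
    have iV: "i \<in> ?V" using i1 F1(1) unfolding suppS_def by blast
    have aV: "a \<in> ?V" using F1 unfolding suppS_def by blast
    have bV: "b \<in> ?V" using F2 unfolding suppS_def by blast
    have ae: "(a, i) \<in> ?E" using False F1 i1 unfolding assoc_graph_def by auto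
    have be: "(b, i) \<in> ?E" using False F2 i2 unfolding assoc_graph_def by auto
    have peo: "is_peo (assoc_graph S)" using ch unfolding chordal_def .
    have fstG: "fst (assoc_graph S) = ?V" unfolding assoc_graph_def by simp
    have "(a, b) \<in> ?E"
      using peo iV aV bV ae be al bl False unfolding is_peo_def fstG
      by (smt (verit, del_insts) insertCI le_neq_implies_less mem_Collect_eq)
    then show ?thesis unfolding assoc_graph_def by auto
  qed
qed

lemma red_sub: "F \<in> red n S i T R \<Longrightarrow> F \<in> S \<or> (level S i \<noteq> {} \<and> (F = T \<or> F \<in> R))"
  unfolding red_def level_def by (auto split: if_splits)

lemma red_contains:
  assumes "supp F \<subseteq> {1..n}" "F \<in> S" "supp F \<noteq> {}" "level S i = {} \<or> lv F \<noteq> i"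
  shows "F \<in> red n S i T R"
proof -
  have l: "lv F \<in> {1..n}" using lv_in[OF assms(3)] assms(1) by auto
  have FL: "F \<in> level S (lv F)" using assms unfolding level_def by auto
  show ?thesis
  proof (cases "level S i = {}")
    case True then show ?thesis unfolding red_def using l FL by auto
  next
    case False
    then have "lv F \<noteq> i" using assms(4) by auto
    then have "lv F \<in> {i<..n} \<or> lv F \<in> {1..<i}" using l by auto
    then show ?thesis unfolding red_def using False FL by auto
  qed
qed

lemma T_in: "level S i \<noteq> {} \<Longrightarrow> T \<in> red n S i T R"
  unfolding red_def by auto

lemma step:
  assumes V: "\<forall>F\<in>S. supp F \<subseteq> {1..n}" and ch: "chordal S" and i: "i \<in> {1..n}"
    and rd: "level S i \<noteq> {} \<longrightarrow> red_data S i T R \<and> supp T = suppS (level S i)"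
  shows "assoc_graph (red n S i T R) = assoc_graph S \<and> (\<forall>F\<in>red n S i T R. supp F \<subseteq> {1..n})"
proof
  show "assoc_graph (red n S i T R) = assoc_graph S"
  proof (rule graph_eq)
    fix a b
    show "(\<exists>F\<in>red n S i T R. a \<in> supp F \<and> b \<in> supp F) = (\<exists>F\<in>S. a \<in> supp F \<and> b \<in> supp F)"
    proof
      assume "\<exists>F\<in>red n S i T R. a \<in> supp F \<and> b \<in> supp F"
      then obtain F where F: "F \<in> red n S i T R" "a \<in> supp F" "b \<in> supp F" by blast
      from red_sub[OF F(1)] show "\<exists>F\<in>S. a \<in> supp F \<and> b \<in> supp F"
      proof
        assume "F \<in> S" then show ?thesis using F by blast
      next
        assume h: "level S i \<noteq> {} \<and> (F = T \<or> F \<in> R)"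
        then have d: "red_data S i T R" "supp T = suppS (level S i)" using rd by auto
        have "supp F \<subseteq> suppS (level S i)"
          using h d unfolding red_data_def suppS_def by auto
        then show ?thesis using clique[OF ch] F by blast
      qed
    next
      assume "\<exists>F\<in>S. a \<in> supp F \<and> b \<in> supp F"
      then obtain F where F: "F \<in> S" "a \<in> supp F" "b \<in> supp F" by blast
      have ne: "supp F \<noteq> {}" using F by auto
      show "\<exists>F\<in>red n S i T R. a \<in> supp F \<and> b \<in> supp F"
      proof (cases "level S i \<noteq> {} \<and> lv F = i")
        case True
        then have "F \<in> level S i" using F ne unfolding level_def by auto
        then have "supp F \<subseteq> supp T" using rd True unfolding suppS_def by auto
        then show ?thesis using T_in True F by blast
      next
        case False
        then have "F \<in> red n S i T R" using red_contains[of F n S i T R] V F ne by blast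
        then show ?thesis using F by blast
      qed
    qed
  qed
next
  show "\<forall>F\<in>red n S i T R. supp F \<subseteq> {1..n}"
  proof
    fix F assume F: "F \<in> red n S i T R"
    from red_sub[OF F] show "supp F \<subseteq> {1..n}"
    proof
      assume "F \<in> S" then show ?thesis using V by blast
    next
      assume h: "level S i \<noteq> {} \<and> (F = T \<or> F \<in> R)"
      then have d: "red_data S i T R" using rd by auto
      show ?thesis using h d i unfolding red_data_def by fastforce
    qed
  qed
qed

theorem proposition3p3:
  fixes n :: nat
    and P :: "'a::field mpoly set"
    and Q :: "nat \<Rightarrow> 'a mpoly set"
    and T :: "nat \<Rightarrow> 'a mpoly"
    and R :: "nat \<Rightarrow> 'a mpoly set"
  assumes P_vars: "\<forall>F\<in>P. supp F \<subseteq> {1..n}"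
    and P_chordal: "chordal P"
    and Q_init: "Q (n + 1) = P"
    and Q_step: "\<forall>i\<in>{1..n}.
        (level (Q (i + 1)) i \<noteq> {} \<longrightarrow> red_data (Q (i + 1)) i (T i) (R i))
        \<and> Q i = red n (Q (i + 1)) i (T i) (R i)"
    and T_supp: "\<forall>i\<in>{1..n}. level (Q (i + 1)) i \<noteq> {} \<longrightarrow>
        supp (T i) = suppS (level (Q (i + 1)) i)"
  shows "assoc_graph (Q 1) = assoc_graph P"
proof -
  have main: "m \<le> n \<Longrightarrow> assoc_graph (Q (n + 1 - m)) = assoc_graph P
      \<and> (\<forall>F\<in>Q (n + 1 - m). supp F \<subseteq> {1..n})" for m
  proof (induction m)
    case 0 then show ?case using Q_init P_vars by simp
  next
    case (Suc m)
    define i where "i = n - m"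
    have i: "i \<in> {1..n}" using Suc.prems unfolding i_def by auto
    have e1: "n + 1 - m = i + 1" using Suc.prems unfolding i_def by auto
    have e2: "n + 1 - Suc m = i" using Suc.prems unfolding i_def by auto
    have IH: "assoc_graph (Q (i + 1)) = assoc_graph P" "\<forall>F\<in>Q (i + 1). supp F \<subseteq> {1..n}"
      using Suc e1 by auto
    have ch: "chordal (Q (i + 1))" using P_chordal IH(1) unfolding chordal_def by simp
    have st: "Q i = red n (Q (i + 1)) i (T i) (R i)" using Q_step i by blast
    have rd: "level (Q (i + 1)) i \<noteq> {} \<longrightarrow> red_data (Q (i + 1)) i (T i) (R i)
        \<and> supp (T i) = suppS (level (Q (i + 1)) i)" using Q_step T_supp i by blast
    show ?case using step[OF IH(2) ch i rd] st IH(1) e2 by simp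
  qed
  show ?thesis using main[of n] by simp
qed

end
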